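(* Let $q\in\mathbb C$ with $|q|>1$, let $t$ be a prime number and $\zeta$ a primitive $t$-th root of unity. Let $\mathcal M$ be the field of meromorphic functions on $\mathbb C^*$, let $\kappa=\{g\in\mathcal M: g(qz)=g(z)\}$, and let $\kappa(z)\subseteq\mathcal M$ be the subfield generated by $\kappa$ and $z$. Let $\theta_q(z)=-\sum_{n\in\mathbb Z}(-1)^nq^{-n(n-1)/2}z^n$. If $\lambda_0\in\kappa(z)$ and $\lambda_{jd}\in\kappa(z)$ ($0\le j\le t-1$, $1\le d\le t-1$) satisfy $$\lambda_0+\sum_{d=1}^{t-1}\Bigl(\lambda_{0d}\,\theta_q(z)^d+\lambda_{1d}\,\theta_q(\zeta z)^d+\dots+\lambda_{t-1,d}\,\theta_q(\zeta^{t-1}z)^d\Bigr)=0,$$ then $\lambda_0=0$ and $\lambda_{jd}=0$ for all $j,d$.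
   Context: $\theta_q$ is a meromorphic (indeed holomorphic) function on $\mathbb C^*$ satisfying $\theta_q(qz)=-qz\,\theta_q(z)$. *)

theory Defs
  imports "HOL-Complex_Analysis.Complex_Analysis"
begin

text \<open>Elements of the field M of meromorphic functions on C* are represented by functions
  meromorphic on C* = -{0}; two representatives are identified when they agree outside a
  discrete (sparse) subset of C*.\<close>

definition mero_eq :: "(complex \<Rightarrow> complex) \<Rightarrow> (complex \<Rightarrow> complex) \<Rightarrow> bool" where
  "mero_eq f g \<longleftrightarrow> (\<forall>\<^sub>\<approx>z\<in>-{0}. f z = g z)"

definition Mero :: "(complex \<Rightarrow> complex) set" where
  "Mero = {f. f meromorphic_on (-{0})}"

definition kappa :: "complex \<Rightarrow> (complex \<Rightarrow> complex) set" where
  "kappa q = {g \<in> Mero. mero_eq (\<lambda>z. g (q * z)) g}"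

inductive_set kappa_z :: "complex \<Rightarrow> (complex \<Rightarrow> complex) set" for q :: complex where
  base: "g \<in> kappa q \<Longrightarrow> g \<in> kappa_z q"
| ident: "(\<lambda>z. z) \<in> kappa_z q"
| add: "f \<in> kappa_z q \<Longrightarrow> g \<in> kappa_z q \<Longrightarrow> (\<lambda>z. f z + g z) \<in> kappa_z q"
| mult: "f \<in> kappa_z q \<Longrightarrow> g \<in> kappa_z q \<Longrightarrow> (\<lambda>z. f z * g z) \<in> kappa_z q"
| uminus: "f \<in> kappa_z q \<Longrightarrow> (\<lambda>z. - f z) \<in> kappa_z q"
| inverse: "f \<in> kappa_z q \<Longrightarrow> (\<lambda>z. inverse (f z)) \<in> kappa_z q"
| eq: "f \<in> kappa_z q \<Longrightarrow> g \<in> Mero \<Longrightarrow> mero_eq f g \<Longrightarrow> g \<in> kappa_z q"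

definition theta :: "complex \<Rightarrow> complex \<Rightarrow> complex" where
  "theta q z = - (\<Sum>\<^sub>\<infinity>n::int. (-1) powi n * q powi (- (n * (n - 1) div 2)) * z powi n)"

end

theory Submission
  imports Defs "HOL-Computational_Algebra.Polynomial"
begin

section \<open>Countability facts\<close>

lemma cosparse_countable:
  assumes "\<forall>\<^sub>\<approx>z\<in>-{0::complex}. P z"
  shows "countable {z. z \<noteq> 0 \<and> \<not> P z}"
proof -
  have "{x. \<not> P x} sparse_in -{0::complex}" using assms by (simp add: eventually_cosparse)
  hence "countable (-{0::complex} \<inter> {x. \<not> P x})"
    by (intro sparse_imp_countable) auto
  moreover have "-{0::complex} \<inter> {x. \<not> P x} = {z. z \<noteq> 0 \<and> \<not> P z}" by auto
  ultimately show ?thesis by simp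
qed

lemma uncountable_punct: "\<not> countable {z::complex. z \<noteq> 0 \<and> P z \<or> z \<noteq> 0 \<and> \<not> P z}"
proof
  assume "countable {z::complex. z \<noteq> 0 \<and> P z \<or> z \<noteq> 0 \<and> \<not> P z}"
  hence "countable (insert 0 {z::complex. z \<noteq> 0 \<and> P z \<or> z \<noteq> 0 \<and> \<not> P z})" by simp
  moreover have "insert 0 {z::complex. z \<noteq> 0 \<and> P z \<or> z \<noteq> 0 \<and> \<not> P z} = UNIV" by auto
  ultimately show False using uncountable_UNIV_complex by simp
qed

lemma countable_union_not_all:
  assumes "countable {z::complex. z \<noteq> 0 \<and> P z}" "countable {z::complex. z \<noteq> 0 \<and> \<not> P z}"
  shows False
proof -
  have c: "countable (insert 0 ({z::complex. z \<noteq> 0 \<and> P z} \<union> {z::complex. z \<noteq> 0 \<and> \<not> P z}))"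
    using assms by simp
  have "insert 0 ({z::complex. z \<noteq> 0 \<and> P z} \<union> {z::complex. z \<noteq> 0 \<and> \<not> P z}) = UNIV" by auto
  with c have "countable (UNIV::complex set)" by simp
  thus False using uncountable_UNIV_complex by simp
qed

lemma exists_avoid:
  assumes "countable (X::complex set)"
  obtains z where "z \<noteq> 0" "z \<notin> X"
proof -
  have c: "countable (insert 0 X)" using assms by simp
  have "insert 0 X \<noteq> UNIV"
  proof
    assume "insert 0 X = UNIV"
    with c have "countable (UNIV::complex set)" by simp
    thus False using uncountable_UNIV_complex by simp
  qed
  then obtain z where "z \<notin> insert 0 X" by blast
  thus ?thesis using that by auto
qed

lemma mero_eq_countable:
  "mero_eq f (\<lambda>z. 0) \<Longrightarrow> countable {z. z \<noteq> 0 \<and> f z \<noteq> 0}"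
  unfolding mero_eq_def by (drule cosparse_countable) simp

lemma connected_punct: "connected (-{0::complex})"
  by (rule connected_punctured_universe) simp

lemma mero_nonzero_countable:
  assumes "f \<in> Mero" "\<not> mero_eq f (\<lambda>z. 0)"
  shows "countable {z. z \<noteq> 0 \<and> f z = 0}"
proof -
  have "eventually (\<lambda>z. f z = 0) (cosparse (-{0})) \<or> eventually (\<lambda>z. f z \<noteq> 0) (cosparse (-{0}))"
    using assms(1) unfolding Mero_def
    by (intro meromorphic_imp_constant_or_avoid connected_punct) auto
  with assms(2) have "\<forall>\<^sub>\<approx>z\<in>-{0::complex}. f z \<noteq> 0" unfolding mero_eq_def by auto
  from cosparse_countable[OF this] show ?thesis by simp
qed

lemma countable_imp_mero_eq:
  assumes "f \<in> Mero" "countable {z. z \<noteq> 0 \<and> f z \<noteq> 0}"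
  shows "mero_eq f (\<lambda>z. 0)"
proof (rule ccontr)
  assume "\<not> mero_eq f (\<lambda>z. 0)"
  from mero_nonzero_countable[OF assms(1) this] have "countable {z. z \<noteq> 0 \<and> \<not> f z \<noteq> 0}" by simp
  with assms(2) show False by (rule countable_union_not_all)
qed

section \<open>Rational behaviour along q-orbits\<close>

definition RatOrb :: "complex \<Rightarrow> (complex \<Rightarrow> complex) \<Rightarrow> complex \<Rightarrow> bool" where
  "RatOrb q f z0 \<longleftrightarrow> (\<exists>p r. r \<noteq> 0 \<and> eventually (\<lambda>n. f (q^n * z0) = poly p (q^n) / poly r (q^n)) sequentially)"

definition Erat :: "complex \<Rightarrow> (complex \<Rightarrow> complex) \<Rightarrow> bool" where
  "Erat q f \<longleftrightarrow> (\<exists>X. countable X \<and> (\<forall>z0. z0 \<noteq> 0 \<longrightarrow> z0 \<notin> X \<longrightarrow> RatOrb q f z0))"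

lemma EratI:
  assumes "countable X" "\<And>z0. z0 \<noteq> 0 \<Longrightarrow> z0 \<notin> X \<Longrightarrow> RatOrb q f z0"
  shows "Erat q f"
  using assms unfolding Erat_def by blast

lemma EratE:
  assumes "Erat q f"
  obtains X where "countable X" "\<forall>z0. z0 \<noteq> 0 \<longrightarrow> z0 \<notin> X \<longrightarrow> RatOrb q f z0"
  using assms unfolding Erat_def by blast

lemma q_pow_inj:
  assumes "norm (q::complex) > 1"
  shows "inj (\<lambda>n::nat. q^n)"
proof (rule injI)
  fix m n :: nat assume "q^m = q^n"
  hence "norm q ^ m = norm q ^ n" by (metis norm_power)
  thus "m = n" using assms by (simp add: power_inject_exp)
qed

lemma ev_poly_nz:
  assumes "norm (q::complex) > 1" "r \<noteq> 0"
  shows "eventually (\<lambda>n. poly r (q^n) \<noteq> 0) sequentially"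
proof -
  have "finite {x. poly r x = 0}" using assms(2) by (rule poly_roots_finite)
  hence "finite ((\<lambda>n. q^n) -` {x. poly r x = 0})"
    by (rule finite_vimageI) (use q_pow_inj[OF assms(1)] in auto)
  hence "finite {n. \<not> poly r (q^n) \<noteq> 0}" by (simp add: vimage_def)
  hence "eventually (\<lambda>n. poly r (q^n) \<noteq> 0) cofinite" by (simp add: eventually_cofinite)
  thus ?thesis by (simp add: cofinite_eq_sequentially)
qed

lemma poly_eq_ev:
  assumes "norm (q::complex) > 1" "eventually (\<lambda>n. poly p (q^n) = poly r (q^n)) sequentially"
  shows "p = r"
proof (rule ccontr)
  assume "p \<noteq> r"
  hence "p - r \<noteq> 0" by simp
  from ev_poly_nz[OF assms(1) this] assms(2)
  have "eventually (\<lambda>n. False) sequentially"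
    by eventually_elim (simp add: poly_diff)
  thus False by simp
qed

lemma orbit_avoid:
  assumes "norm (q::complex) > 1" "z0 \<notin> (\<Union>n. (\<lambda>z. z / q^n) ` S)"
  shows "q^n * z0 \<notin> S"
proof
  assume "q^n * z0 \<in> S"
  moreover have "q \<noteq> 0" using assms(1) by auto
  ultimately have "z0 \<in> (\<lambda>z. z / q^n) ` S" by (intro image_eqI[of _ _ "q^n * z0"]) auto
  thus False using assms(2) by blast
qed

lemma Erat_const: "Erat q (\<lambda>z. c)"
proof (rule EratI[of "{}"])
  fix z0 :: complex
  show "RatOrb q (\<lambda>z. c) z0" unfolding RatOrb_def
    by (rule exI[of _ "[:c:]"], rule exI[of _ 1]) auto
qed auto

lemma Erat_id: "Erat q (\<lambda>z. z)"
proof (rule EratI[of "{}"])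
  fix z0 :: complex
  show "RatOrb q (\<lambda>z. z) z0" unfolding RatOrb_def
    by (rule exI[of _ "[:0, z0:]"], rule exI[of _ 1]) (auto simp: mult.commute)
qed auto

lemma Erat_ceq:
  assumes "norm q > 1" "Erat q f" "countable {z. z \<noteq> 0 \<and> f z \<noteq> g z}"
  shows "Erat q g"
proof -
  obtain X where X: "countable X" "\<forall>z0. z0 \<noteq> 0 \<longrightarrow> z0 \<notin> X \<longrightarrow> RatOrb q f z0"
    using assms(2) by (rule EratE)
  let ?S = "{z. z \<noteq> 0 \<and> f z \<noteq> g z}"
  show ?thesis
  proof (rule EratI[of "X \<union> (\<Union>n. (\<lambda>z. z / q^n) ` ?S)"])
    show "countable (X \<union> (\<Union>n. (\<lambda>z. z / q^n) ` ?S))" using X(1) assms(3) by auto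
    fix z0 assume z0: "z0 \<noteq> 0" "z0 \<notin> X \<union> (\<Union>n. (\<lambda>z. z / q^n) ` ?S)"
    from X(2) z0 obtain p r where pr: "r \<noteq> 0"
      "eventually (\<lambda>n. f (q^n * z0) = poly p (q^n) / poly r (q^n)) sequentially" unfolding RatOrb_def by auto
    have "q \<noteq> 0" using assms(1) by auto
    have "f (q^n * z0) = g (q^n * z0)" for n
      using orbit_avoid[OF assms(1), of z0 ?S n] z0 \<open>q \<noteq> 0\<close> by auto
    with pr show "RatOrb q g z0" unfolding RatOrb_def by auto
  qed
qed

lemma Erat_kappa:
  assumes "norm q > 1" "g \<in> kappa q"
  shows "Erat q g"
proof -
  let ?S = "{z. z \<noteq> 0 \<and> g (q * z) \<noteq> g z}"
  have cS: "countable ?S" using assms(2) unfolding kappa_def mero_eq_def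
    by (auto dest: cosparse_countable)
  have "q \<noteq> 0" using assms(1) by auto
  show ?thesis
  proof (rule EratI[of "\<Union>n. (\<lambda>z. z / q^n) ` ?S"])
    show "countable (\<Union>n. (\<lambda>z. z / q^n) ` ?S)" using cS by auto
    fix z0 assume z0: "z0 \<noteq> 0" "z0 \<notin> (\<Union>n. (\<lambda>z. z / q^n) ` ?S)"
    have "g (q^n * z0) = g z0" for n
    proof (induction n)
      case (Suc n)
      have "q^n * z0 \<notin> ?S" by (rule orbit_avoid[OF assms(1) z0(2)])
      hence "g (q * (q^n * z0)) = g (q^n * z0)" using z0(1) \<open>q \<noteq> 0\<close> by auto
      thus ?case using Suc by (simp add: mult.assoc)
    qed simp
    thus "RatOrb q g z0" unfolding RatOrb_def
      by (intro exI[of _ "[:g z0:]"] exI[of _ 1]) auto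
  qed
qed

lemma RatOrbE:
  assumes "RatOrb q f z0"
  obtains p r where "r \<noteq> 0" "eventually (\<lambda>n. f (q^n * z0) = poly p (q^n) / poly r (q^n)) sequentially"
  using assms unfolding RatOrb_def by blast

lemma RatOrbI:
  assumes "r \<noteq> 0" "eventually (\<lambda>n. f (q^n * z0) = poly p (q^n) / poly r (q^n)) sequentially"
  shows "RatOrb q f z0"
  using assms unfolding RatOrb_def by blast

lemma RatOrb_add:
  assumes q: "norm q > 1" and "RatOrb q f z0" "RatOrb q g z0"
  shows "RatOrb q (\<lambda>z. f z + g z) z0"
proof -
  obtain p1 r1 where 1: "r1 \<noteq> 0" "eventually (\<lambda>n. f (q^n * z0) = poly p1 (q^n) / poly r1 (q^n)) sequentially"
    using assms(2) by (rule RatOrbE)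
  obtain p2 r2 where 2: "r2 \<noteq> 0" "eventually (\<lambda>n. g (q^n * z0) = poly p2 (q^n) / poly r2 (q^n)) sequentially"
    using assms(3) by (rule RatOrbE)
  show ?thesis
  proof (rule RatOrbI[where r="r1 * r2" and p="p1 * r2 + p2 * r1"])
    show "r1 * r2 \<noteq> 0" using 1 2 by simp
    show "eventually (\<lambda>n. f (q^n * z0) + g (q^n * z0) = poly (p1 * r2 + p2 * r1) (q^n) / poly (r1 * r2) (q^n)) sequentially"
      using 1(2) 2(2) ev_poly_nz[OF q 1(1)] ev_poly_nz[OF q 2(1)]
      by eventually_elim (simp add: field_simps)
  qed
qed

lemma RatOrb_mult:
  assumes q: "norm q > 1" and "RatOrb q f z0" "RatOrb q g z0"
  shows "RatOrb q (\<lambda>z. f z * g z) z0"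
proof -
  obtain p1 r1 where 1: "r1 \<noteq> 0" "eventually (\<lambda>n. f (q^n * z0) = poly p1 (q^n) / poly r1 (q^n)) sequentially"
    using assms(2) by (rule RatOrbE)
  obtain p2 r2 where 2: "r2 \<noteq> 0" "eventually (\<lambda>n. g (q^n * z0) = poly p2 (q^n) / poly r2 (q^n)) sequentially"
    using assms(3) by (rule RatOrbE)
  show ?thesis
  proof (rule RatOrbI[where r="r1 * r2" and p="p1 * p2"])
    show "r1 * r2 \<noteq> 0" using 1 2 by simp
    show "eventually (\<lambda>n. f (q^n * z0) * g (q^n * z0) = poly (p1 * p2) (q^n) / poly (r1 * r2) (q^n)) sequentially"
      using 1(2) 2(2) by eventually_elim simp
  qed
qed

lemma RatOrb_uminus:
  assumes "RatOrb q f z0"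
  shows "RatOrb q (\<lambda>z. - f z) z0"
proof -
  obtain p1 r1 where 1: "r1 \<noteq> 0" "eventually (\<lambda>n. f (q^n * z0) = poly p1 (q^n) / poly r1 (q^n)) sequentially"
    using assms(1) by (rule RatOrbE)
  show ?thesis
  proof (rule RatOrbI[where r="r1" and p="- p1"])
    show "eventually (\<lambda>n. - f (q^n * z0) = poly (- p1) (q^n) / poly r1 (q^n)) sequentially"
      using 1(2) by eventually_elim simp
  qed (use 1 in auto)
qed

lemma RatOrb_inverse:
  assumes q: "norm q > 1" and "RatOrb q f z0"
  shows "RatOrb q (\<lambda>z. inverse (f z)) z0"
proof -
  obtain p1 r1 where 1: "r1 \<noteq> 0" "eventually (\<lambda>n. f (q^n * z0) = poly p1 (q^n) / poly r1 (q^n)) sequentially"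
    using assms(2) by (rule RatOrbE)
  show ?thesis
  proof (cases "p1 = 0")
    case True
    show ?thesis
    proof (rule RatOrbI[where r=1 and p=0])
      show "eventually (\<lambda>n. inverse (f (q^n * z0)) = poly 0 (q^n) / poly 1 (q^n)) sequentially"
        using 1(2) by eventually_elim (simp add: True)
    qed auto
  next
    case False
    show ?thesis
    proof (rule RatOrbI[where r=p1 and p=r1])
      show "eventually (\<lambda>n. inverse (f (q^n * z0)) = poly r1 (q^n) / poly p1 (q^n)) sequentially"
        using 1(2) by eventually_elim simp
    qed (use False in auto)
  qed
qed

lemma RatOrb_shift:
  assumes "RatOrb q f z0"
  shows "RatOrb q (\<lambda>z. f (q * z)) z0"
proof -
  obtain p1 r1 where 1: "r1 \<noteq> 0" "eventually (\<lambda>n. f (q^n * z0) = poly p1 (q^n) / poly r1 (q^n)) sequentially"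
    using assms(1) by (rule RatOrbE)
  from 1(2) have 2: "eventually (\<lambda>n. f (q^Suc n * z0) = poly p1 (q^Suc n) / poly r1 (q^Suc n)) sequentially"
    by (subst eventually_sequentially_Suc)
  show ?thesis
  proof (cases "q = 0")
    case True
    show ?thesis
    proof (rule RatOrbI[where r=1 and p="[:f 0:]"])
      show "eventually (\<lambda>n. f (q * (q^n * z0)) = poly [:f 0:] (q^n) / poly 1 (q^n)) sequentially"
        by (simp add: True)
    qed auto
  next
    case False
    show ?thesis
    proof (rule RatOrbI[where r="r1 \<circ>\<^sub>p [:0, q:]" and p="p1 \<circ>\<^sub>p [:0, q:]"])
      show "r1 \<circ>\<^sub>p [:0, q:] \<noteq> 0" using 1(1) False
        by (subst pcompose_eq_0_iff) auto
      show "eventually (\<lambda>n. f (q * (q^n * z0)) = poly (p1 \<circ>\<^sub>p [:0, q:]) (q^n) / poly (r1 \<circ>\<^sub>p [:0, q:]) (q^n)) sequentially"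
        using 2 by eventually_elim (simp add: poly_pcompose mult_ac)
    qed
  qed
qed

lemma Erat_bin:
  assumes "Erat q f" "Erat q g" "\<And>z0. RatOrb q f z0 \<Longrightarrow> RatOrb q g z0 \<Longrightarrow> RatOrb q h z0"
  shows "Erat q h"
proof -
  obtain X where X: "countable X" "\<forall>z0. z0 \<noteq> 0 \<longrightarrow> z0 \<notin> X \<longrightarrow> RatOrb q f z0"
    using assms(1) by (rule EratE)
  obtain Y where Y: "countable Y" "\<forall>z0. z0 \<noteq> 0 \<longrightarrow> z0 \<notin> Y \<longrightarrow> RatOrb q g z0"
    using assms(2) by (rule EratE)
  show ?thesis
    by (rule EratI[of "X \<union> Y"]) (use X Y assms(3) in auto)
qed

lemma Erat_un:
  assumes "Erat q f" "\<And>z0. RatOrb q f z0 \<Longrightarrow> RatOrb q h z0"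
  shows "Erat q h"
  using assms(1) assms(1) by (rule Erat_bin) (use assms(2) in auto)

lemma Erat_add: "norm q > 1 \<Longrightarrow> Erat q f \<Longrightarrow> Erat q g \<Longrightarrow> Erat q (\<lambda>z. f z + g z)"
  by (rule Erat_bin[of q f g]) (auto intro: RatOrb_add)

lemma Erat_mult: "norm q > 1 \<Longrightarrow> Erat q f \<Longrightarrow> Erat q g \<Longrightarrow> Erat q (\<lambda>z. f z * g z)"
  by (rule Erat_bin[of q f g]) (auto intro: RatOrb_mult)

lemma Erat_uminus: "Erat q f \<Longrightarrow> Erat q (\<lambda>z. - f z)"
  by (rule Erat_un[of q f]) (auto intro: RatOrb_uminus)

lemma Erat_inverse: "norm q > 1 \<Longrightarrow> Erat q f \<Longrightarrow> Erat q (\<lambda>z. inverse (f z))"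
  by (rule Erat_un[of q f]) (auto intro: RatOrb_inverse)

lemma Erat_shift: "Erat q f \<Longrightarrow> Erat q (\<lambda>z. f (q * z))"
  by (rule Erat_un[of q f]) (auto intro: RatOrb_shift)

lemma Mero_shift:
  assumes "f \<in> Mero" "q \<noteq> 0"
  shows "(\<lambda>z. f (q * z)) \<in> Mero"
proof -
  have "(\<lambda>w. f (q * w)) meromorphic_on (-{0})"
    by (rule meromorphic_on_compose[of f "-{0}" "\<lambda>w. q * w"])
       (use assms in \<open>auto simp: Mero_def intro!: analytic_intros\<close>)
  thus ?thesis by (simp add: Mero_def)
qed

lemma kappa_z_K:
  assumes q: "norm q > 1" and "f \<in> kappa_z q"
  shows "f \<in> Mero \<and> Erat q f"
  using assms(2)
proof (induction rule: kappa_z.induct)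
  case (base g)
  thus ?case using Erat_kappa[OF q] by (auto simp: kappa_def)
next
  case ident
  thus ?case using Erat_id by (auto simp: Mero_def)
next
  case (add f g)
  thus ?case using Erat_add[OF q] by (auto simp: Mero_def intro!: meromorphic_intros)
next
  case (mult f g)
  thus ?case using Erat_mult[OF q] by (auto simp: Mero_def intro!: meromorphic_intros)
next
  case (uminus f)
  thus ?case using Erat_uminus by (auto simp: Mero_def intro!: meromorphic_intros)
next
  case (inverse f)
  thus ?case using Erat_inverse[OF q] by (auto simp: Mero_def intro!: meromorphic_intros)
next
  case (eq f g)
  have "countable {z. z \<noteq> 0 \<and> \<not> f z = g z}"
    by (rule cosparse_countable) (use eq(3) in \<open>simp add: mero_eq_def\<close>)
  thus ?case using Erat_ceq[OF q] eq by auto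
qed

lemma cross_mult:
  fixes A0 A1 B0 B1 C0 C1 D0 D1 g g' :: complex
  assumes "A0 \<noteq> 0" "B0 \<noteq> 0" "C0 \<noteq> 0" "D0 \<noteq> 0"
    "(A1 / A0) * g * (B1 / B0) = g' * (C1 / C0) * (D1 / D0)"
  shows "g * A1 * B1 * C0 * D0 = g' * C1 * D1 * A0 * B0"
proof -
  have "g * A1 * B1 * C0 * D0 = ((A1 / A0) * g * (B1 / B0)) * (A0 * B0 * C0 * D0)"
    using assms(1,2) by (simp add: field_simps)
  also have "\<dots> = (g' * (C1 / C0) * (D1 / D0)) * (A0 * B0 * C0 * D0)" using assms(5) by simp
  also have "\<dots> = g' * C1 * D1 * A0 * B0" using assms(3,4) by (simp add: field_simps)
  finally show ?thesis .
qed

lemma key_lemma: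
  assumes q: "norm q > 1"
    and a: "a \<in> Mero" "Erat q a" "\<not> mero_eq a (\<lambda>z. 0)"
    and b: "b \<in> Mero" "Erat q b" "\<not> mero_eq b (\<lambda>z. 0)"
    and g: "g \<noteq> 0" "g' \<noteq> 0"
    and rel: "countable {z. z \<noteq> 0 \<and> a (q*z) * (g * z^d) * b z \<noteq> g' * z^d' * b (q*z) * a z}"
  shows "d = d' \<and> (\<exists>k::int. g' = g * q powi k)"
proof -
  have q0: "q \<noteq> 0" using q by auto
  define Za where "Za = {z. z \<noteq> 0 \<and> a z = 0}"
  define Zb where "Zb = {z. z \<noteq> 0 \<and> b z = 0}"
  define S where "S = {z. z \<noteq> 0 \<and> a (q*z) * (g * z^d) * b z \<noteq> g' * z^d' * b (q*z) * a z}"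
  have cZ: "countable (Za \<union> Zb \<union> S)"
    using mero_nonzero_countable[OF a(1,3)] mero_nonzero_countable[OF b(1,3)] rel
    unfolding Za_def Zb_def S_def by auto
  obtain Xa where Xa: "countable Xa" "\<forall>z0. z0 \<noteq> 0 \<longrightarrow> z0 \<notin> Xa \<longrightarrow> RatOrb q a z0"
    using a(2) by (rule EratE)
  obtain Xb where Xb: "countable Xb" "\<forall>z0. z0 \<noteq> 0 \<longrightarrow> z0 \<notin> Xb \<longrightarrow> RatOrb q b z0"
    using b(2) by (rule EratE)
  have "countable (Xa \<union> Xb \<union> (\<Union>n. (\<lambda>z. z / q^n) ` (Za \<union> Zb \<union> S)))"
    using Xa(1) Xb(1) cZ by auto
  then obtain z0 where z0: "z0 \<noteq> 0" "z0 \<notin> Xa \<union> Xb \<union> (\<Union>n. (\<lambda>z. z / q^n) ` (Za \<union> Zb \<union> S))"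
    by (rule exists_avoid)
  have orb: "q^n * z0 \<notin> Za \<union> Zb \<union> S" for n
    by (rule orbit_avoid[OF q]) (use z0 in blast)
  have orbnz: "q^n * z0 \<noteq> 0" for n using q0 z0 by simp
  have anz: "a (q^n * z0) \<noteq> 0" for n using orb[of n] orbnz[of n] unfolding Za_def by blast
  have bnz: "b (q^n * z0) \<noteq> 0" for n using orb[of n] orbnz[of n] unfolding Zb_def by blast
  have relo: "a (q * (q^n * z0)) * (g * (q^n * z0)^d) * b (q^n * z0) =
      g' * (q^n * z0)^d' * b (q * (q^n * z0)) * a (q^n * z0)" for n
    using orb[of n] orbnz[of n] unfolding S_def by blast
  obtain pa ra where pa: "ra \<noteq> 0" "eventually (\<lambda>n. a (q^n * z0) = poly pa (q^n) / poly ra (q^n)) sequentially"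
  proof -
    have "RatOrb q a z0" using Xa(2) z0 by blast
    thus ?thesis using that by (rule RatOrbE)
  qed
  obtain pb rb where pb: "rb \<noteq> 0" "eventually (\<lambda>n. b (q^n * z0) = poly pb (q^n) / poly rb (q^n)) sequentially"
  proof -
    have "RatOrb q b z0" using Xb(2) z0 by blast
    thus ?thesis using that by (rule RatOrbE)
  qed
  have pa0: "pa \<noteq> 0"
  proof
    assume 0: "pa = 0"
    from pa(2) have "eventually (\<lambda>n. False) sequentially"
      by eventually_elim (use anz 0 in auto)
    thus False by simp
  qed
  have pb0: "pb \<noteq> 0"
  proof
    assume 0: "pb = 0"
    from pb(2) have "eventually (\<lambda>n. False) sequentially"
      by eventually_elim (use bnz 0 in auto)
    thus False by simp
  qed
  define Q where "Q = [:0, q:]"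
  have degQ: "degree Q = 1" using q0 by (simp add: Q_def)
  have lcQ: "lead_coeff Q = q" using q0 by (simp add: Q_def)
  have cQ: "coeff Q (Suc 0) = q" by (simp add: Q_def)
  have polyQ: "poly (p \<circ>\<^sub>p Q) x = poly p (q * x)" for p x by (simp add: Q_def poly_pcompose mult.commute)
  define L where "L = smult (g * z0^d) (monom 1 d * (pa \<circ>\<^sub>p Q) * ra * pb * (rb \<circ>\<^sub>p Q))"
  define R where "R = smult (g' * z0^d') (monom 1 d' * (pb \<circ>\<^sub>p Q) * rb * pa * (ra \<circ>\<^sub>p Q))"
  have pa': "eventually (\<lambda>n. a (q^Suc n * z0) = poly pa (q^Suc n) / poly ra (q^Suc n)) sequentially"
    using pa(2) by (subst eventually_sequentially_Suc)
  have pb': "eventually (\<lambda>n. b (q^Suc n * z0) = poly pb (q^Suc n) / poly rb (q^Suc n)) sequentially"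
    using pb(2) by (subst eventually_sequentially_Suc)
  have ra': "eventually (\<lambda>n. poly ra (q^Suc n) \<noteq> 0) sequentially"
    using ev_poly_nz[OF q pa(1)] by (subst eventually_sequentially_Suc)
  have rb': "eventually (\<lambda>n. poly rb (q^Suc n) \<noteq> 0) sequentially"
    using ev_poly_nz[OF q pb(1)] by (subst eventually_sequentially_Suc)
  have "eventually (\<lambda>n. poly L (q^n) = poly R (q^n)) sequentially"
    using pa(2) pb(2) pa' pb' ra' rb' ev_poly_nz[OF q pa(1)] ev_poly_nz[OF q pb(1)]
  proof eventually_elim
    case (elim n)
    define x where "x = q^n"
    have qx: "q^Suc n = q * x" by (simp add: x_def)
    have "(poly pa (q*x) / poly ra (q*x)) * (g * (x * z0)^d) * (poly pb x / poly rb x) =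
        (g' * (x * z0)^d') * (poly pb (q*x) / poly rb (q*x)) * (poly pa x / poly ra x)"
      using relo[of n] elim unfolding x_def by (simp add: mult_ac)
    from cross_mult[OF _ _ _ _ this] elim
    have "(g * (x * z0)^d) * poly pa (q*x) * poly pb x * poly rb (q*x) * poly ra x =
          (g' * (x * z0)^d') * poly pb (q*x) * poly pa x * poly ra (q*x) * poly rb x"
      unfolding x_def[symmetric] qx by simp
    thus ?case unfolding L_def R_def x_def[symmetric]
      by (simp add: polyQ poly_monom power_mult_distrib mult_ac)
  qed
  hence LR: "L = R" by (rule poly_eq_ev[OF q])
  have nzs: "pa \<circ>\<^sub>p Q \<noteq> 0" "pb \<circ>\<^sub>p Q \<noteq> 0" "ra \<circ>\<^sub>p Q \<noteq> 0" "rb \<circ>\<^sub>p Q \<noteq> 0"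
    using pa0 pb0 pa(1) pb(1) degQ by (auto simp: pcompose_eq_0_iff)
  have m0: "monom (1::complex) k \<noteq> 0" for k by simp
  have degL: "degree L = d + degree pa + degree ra + degree pb + degree rb"
    unfolding L_def using g z0 nzs pa0 pb0 pa(1) pb(1)
    by (simp add: degree_mult_eq degree_pcompose degQ degree_monom_eq)
  have degR: "degree R = d' + degree pb + degree rb + degree pa + degree ra"
    unfolding R_def using g z0 nzs pa0 pb0 pa(1) pb(1)
    by (simp add: degree_mult_eq degree_pcompose degQ degree_monom_eq)
  from LR degL degR have dd: "d = d'" by simp
  have lcL: "lead_coeff L = g * z0^d * (lead_coeff pa * q ^ degree pa * lead_coeff ra * lead_coeff pb *
       (lead_coeff rb * q ^ degree rb))"
    unfolding L_def using g z0 pa0 pb0 pa(1) pb(1) q0 by (simp add: lead_coeff_mult lead_coeff_comp degQ lcQ cQ degree_monom_eq)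
  have lcR: "lead_coeff R = g' * z0^d' * (lead_coeff pb * q ^ degree pb * lead_coeff rb * lead_coeff pa *
       (lead_coeff ra * q ^ degree ra))"
    unfolding R_def using g z0 pa0 pb0 pa(1) pb(1) q0 by (simp add: lead_coeff_mult lead_coeff_comp degQ lcQ cQ degree_monom_eq)
  define C where "C = z0^d * lead_coeff pa * lead_coeff ra * lead_coeff pb * lead_coeff rb"
  have e: "lead_coeff L = lead_coeff R" using LR by simp
  have "(g * q ^ degree pa * q ^ degree rb) * C = (g' * q ^ degree pb * q ^ degree ra) * C"
    using e unfolding lcL lcR dd C_def by (simp only: mult_ac)
  moreover have "C \<noteq> 0"
    using z0 pa0 pb0 pa(1) pb(1) unfolding C_def by simp
  ultimately have eq: "g * q ^ (degree pa + degree rb) = g' * q ^ (degree pb + degree ra)"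
    by (simp add: power_add mult.assoc)
  have pw: "q powi (int (degree pa + degree rb) - int (degree pb + degree ra)) =
      q ^ (degree pa + degree rb) / q ^ (degree pb + degree ra)"
    using q0 by (subst power_int_diff) (simp, simp only: power_int_of_nat)
  have "g' = g * q ^ (degree pa + degree rb) / q ^ (degree pb + degree ra)"
    using eq q0 by (simp add: field_simps)
  hence "g' = g * q powi (int (degree pa + degree rb) - int (degree pb + degree ra))"
    unfolding pw by (simp only: times_divide_eq_right)
  thus ?thesis using dd by blast
qed

section \<open>Linear independence\<close>

lemma Erat_monom: "Erat q (\<lambda>z. c * z^k)"
proof (rule EratI[of "{}"])
  fix z0 :: complex
  show "RatOrb q (\<lambda>z. c * z^k) z0"
    by (rule RatOrbI[where r=1 and p="monom (c * z0^k) k"]) (auto simp: poly_monom power_mult_distrib mult_ac)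
qed auto

lemma Erat_diff: "norm q > 1 \<Longrightarrow> Erat q f \<Longrightarrow> Erat q g \<Longrightarrow> Erat q (\<lambda>z. f z - g z)"
  using Erat_add[of q f "\<lambda>z. - g z"] Erat_uminus[of q g] by simp

lemma countable_shift_set:
  assumes "countable Z"
  shows "countable (Z \<union> (\<lambda>z. z / (q::complex)) ` Z)"
  using assms by auto

lemma shift_avoid:
  assumes "q \<noteq> (0::complex)" "z \<notin> Z \<union> (\<lambda>z. z / q) ` Z"
  shows "z \<notin> Z" "q * z \<notin> Z"
proof -
  show "z \<notin> Z" using assms by auto
  show "q * z \<notin> Z"
  proof
    assume "q * z \<in> Z"
    hence "(q * z) / q \<in> (\<lambda>z. z / q) ` Z" by blast
    thus False using assms by simp
  qed
qed

lemma indep_aux: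
  fixes I :: "'i set" and a f :: "'i \<Rightarrow> complex \<Rightarrow> complex" and gam :: "'i \<Rightarrow> complex" and e :: "'i \<Rightarrow> nat"
  assumes q: "norm q > 1" and fin: "finite I"
    and gam: "\<forall>i\<in>I. gam i \<noteq> 0"
    and feq: "\<forall>i\<in>I. \<forall>z. z \<noteq> 0 \<longrightarrow> f i (q*z) = gam i * z^(e i) * f i z"
    and fnz: "\<forall>i\<in>I. \<not> countable {z. z \<noteq> 0 \<and> f i z \<noteq> 0}"
    and dist: "\<forall>i\<in>I. \<forall>i'\<in>I. i \<noteq> i' \<longrightarrow> e i = e i' \<longrightarrow> (\<forall>k::int. gam i' \<noteq> gam i * q powi k)"
  shows "card {i\<in>I. \<not> mero_eq (a i) (\<lambda>z. 0)} = n \<Longrightarrow> \<forall>i\<in>I. a i \<in> Mero \<and> Erat q (a i) \<Longrightarrow>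
     countable {z. z \<noteq> 0 \<and> (\<Sum>i\<in>I. a i z * f i z) \<noteq> 0} \<Longrightarrow> \<forall>i\<in>I. mero_eq (a i) (\<lambda>z. 0)"
proof (induction n arbitrary: a rule: less_induct)
  case (less n a)
  note K = less.prems(2) and rel = less.prems(3)
  have q0: "q \<noteq> 0" using q by auto
  show ?case
  proof (rule ccontr)
    assume "\<not> (\<forall>i\<in>I. mero_eq (a i) (\<lambda>z. 0))"
    then obtain i0 where i0: "i0 \<in> I" "\<not> mero_eq (a i0) (\<lambda>z. 0)" by blast
    define b where "b i z = a i (q*z) * (gam i * z^(e i)) * a i0 z - gam i0 * z^(e i0) * a i0 (q*z) * a i z" for i z
    have bK: "b i \<in> Mero \<and> Erat q (b i)" if "i \<in> I" for i
    proof
      have "a i \<in> Mero" "a i0 \<in> Mero" "(\<lambda>z. a i (q*z)) \<in> Mero" "(\<lambda>z. a i0 (q*z)) \<in> Mero"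
        using K that i0(1) Mero_shift[OF _ q0] by auto
      thus "b i \<in> Mero" unfolding b_def Mero_def by (auto intro!: meromorphic_intros)
      have "Erat q (a i)" "Erat q (a i0)" "Erat q (\<lambda>z. a i (q*z))" "Erat q (\<lambda>z. a i0 (q*z))"
        using K that i0(1) Erat_shift by auto
      thus "Erat q (b i)" unfolding b_def
        by (intro Erat_diff Erat_mult q Erat_monom) (auto simp: mult.assoc[symmetric])
    qed
    define S where "S = {z. z \<noteq> 0 \<and> (\<Sum>i\<in>I. a i z * f i z) \<noteq> 0}"
    have relb: "countable {z. z \<noteq> 0 \<and> (\<Sum>i\<in>I. b i z * f i z) \<noteq> 0}"
    proof (rule countable_subset[OF _ countable_shift_set[OF rel[folded S_def], of q]], rule subsetI, rule ccontr)
      fix z assume z0: "z \<in> {z. z \<noteq> 0 \<and> (\<Sum>i\<in>I. b i z * f i z) \<noteq> 0}" and z3: "z \<notin> S \<union> (\<lambda>z. z / q) ` S"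
      from z0 z3 have z: "z \<noteq> 0" "(\<Sum>i\<in>I. b i z * f i z) \<noteq> 0" "z \<notin> S \<union> (\<lambda>z. z / q) ` S" by auto
      have qz: "q * z \<noteq> 0" using z q0 by simp
      have s1: "(\<Sum>i\<in>I. a i z * f i z) = 0" using shift_avoid(1)[OF q0 z(3)] z(1) unfolding S_def by auto
      have s2: "(\<Sum>i\<in>I. a i (q*z) * f i (q*z)) = 0" using shift_avoid(2)[OF q0 z(3)] qz unfolding S_def by auto
      have "(\<Sum>i\<in>I. b i z * f i z) =
          (\<Sum>i\<in>I. a i0 z * (a i (q*z) * f i (q*z)) - gam i0 * z^(e i0) * a i0 (q*z) * (a i z * f i z))"
      proof (rule sum.cong[OF refl])
        fix i assume "i \<in> I"
        hence fi: "f i (q*z) = gam i * z^(e i) * f i z" using feq z(1) by blast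
        show "b i z * f i z = a i0 z * (a i (q*z) * f i (q*z)) - gam i0 * z^(e i0) * a i0 (q*z) * (a i z * f i z)"
          unfolding fi b_def by (simp add: algebra_simps)
      qed
      also have "\<dots> = a i0 z * (\<Sum>i\<in>I. a i (q*z) * f i (q*z)) - gam i0 * z^(e i0) * a i0 (q*z) * (\<Sum>i\<in>I. a i z * f i z)"
        by (simp add: sum_subtractf sum_distrib_left)
      also have "\<dots> = 0" using s1 s2 by simp
      finally show False using z(2) by simp
    qed
    have sub: "{i\<in>I. \<not> mero_eq (b i) (\<lambda>z. 0)} \<subseteq> {i\<in>I. \<not> mero_eq (a i) (\<lambda>z. 0)} - {i0}"
    proof (rule subsetI)
      fix i assume "i \<in> {i\<in>I. \<not> mero_eq (b i) (\<lambda>z. 0)}"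
      hence i: "i \<in> I" "\<not> mero_eq (b i) (\<lambda>z. 0)" by auto
      have ne: "i \<noteq> i0"
      proof
        assume "i = i0"
        hence "b i = (\<lambda>z. 0)" unfolding b_def by (auto simp: fun_eq_iff)
        hence "mero_eq (b i) (\<lambda>z. 0)" by (simp add: mero_eq_def)
        with i(2) show False by simp
      qed
      have na: "\<not> mero_eq (a i) (\<lambda>z. 0)"
      proof
        assume ai: "mero_eq (a i) (\<lambda>z. 0)"
        define Z where "Z = {z. z \<noteq> 0 \<and> a i z \<noteq> 0}"
        have cZ: "countable Z" using mero_eq_countable[OF ai] by (simp add: Z_def)
        have "countable {z. z \<noteq> 0 \<and> b i z \<noteq> 0}"
        proof (rule countable_subset[OF _ countable_shift_set[OF cZ, of q]], rule subsetI, rule ccontr)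
          fix z assume z0: "z \<in> {z. z \<noteq> 0 \<and> b i z \<noteq> 0}" and z3: "z \<notin> Z \<union> (\<lambda>z. z / q) ` Z"
          from z0 z3 have z: "z \<noteq> 0" "b i z \<noteq> 0" "z \<notin> Z \<union> (\<lambda>z. z / q) ` Z" by auto
          have "a i z = 0" using shift_avoid(1)[OF q0 z(3)] z(1) by (auto simp: Z_def)
          moreover have "a i (q*z) = 0" using shift_avoid(2)[OF q0 z(3)] z(1) q0 by (auto simp: Z_def)
          ultimately show False using z(2) by (simp add: b_def)
        qed
        hence "mero_eq (b i) (\<lambda>z. 0)" using bK[OF i(1)] by (intro countable_imp_mero_eq) auto
        with i(2) show False by simp
      qed
      show "i \<in> {i\<in>I. \<not> mero_eq (a i) (\<lambda>z. 0)} - {i0}" using i ne na by blast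
    qed
    have "card {i\<in>I. \<not> mero_eq (b i) (\<lambda>z. 0)} < n"
    proof -
      have "{i\<in>I. \<not> mero_eq (b i) (\<lambda>z. 0)} \<subset> {i\<in>I. \<not> mero_eq (a i) (\<lambda>z. 0)}"
        using sub i0 by blast
      hence "card {i\<in>I. \<not> mero_eq (b i) (\<lambda>z. 0)} < card {i\<in>I. \<not> mero_eq (a i) (\<lambda>z. 0)}"
        by (intro psubset_card_mono) (use fin in auto)
      thus ?thesis using less.prems(1) by simp
    qed
    from less.IH[OF this refl _ relb] bK have bz: "\<forall>i\<in>I. mero_eq (b i) (\<lambda>z. 0)" by blast
    have az: "mero_eq (a i) (\<lambda>z. 0)" if i: "i \<in> I" "i \<noteq> i0" for i
    proof (rule ccontr)
      assume ai: "\<not> mero_eq (a i) (\<lambda>z. 0)"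
      have "countable {z. z \<noteq> 0 \<and> b i z \<noteq> 0}" using mero_eq_countable bz i by blast
      hence rel': "countable {z. z \<noteq> 0 \<and> a i (q*z) * (gam i * z^(e i)) * a i0 z \<noteq> gam i0 * z^(e i0) * a i0 (q*z) * a i z}"
        by (simp add: b_def)
      have "e i = e i0 \<and> (\<exists>k::int. gam i0 = gam i * q powi k)"
        by (rule key_lemma[OF q _ _ ai _ _ i0(2) _ _ rel']) (use K i i0 gam in auto)
      thus False using dist i i0(1) by blast
    qed
    define Zs where "Zs = (\<Union>i\<in>I - {i0}. {z. z \<noteq> 0 \<and> a i z \<noteq> 0})"
    have cZs: "countable Zs" unfolding Zs_def
      using fin az mero_eq_countable by (intro countable_UN) (auto intro: countable_finite)
    have cZ0: "countable {z. z \<noteq> 0 \<and> a i0 z = 0}"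
      using mero_nonzero_countable[OF _ i0(2)] K i0(1) by auto
    have "countable {z. z \<noteq> 0 \<and> f i0 z \<noteq> 0}"
    proof (rule countable_subset[of _ "S \<union> Zs \<union> {z. z \<noteq> 0 \<and> a i0 z = 0}"])
      show "countable (S \<union> Zs \<union> {z. z \<noteq> 0 \<and> a i0 z = 0})"
        using rel cZs cZ0 unfolding S_def by auto
      show "{z. z \<noteq> 0 \<and> f i0 z \<noteq> 0} \<subseteq> S \<union> Zs \<union> {z. z \<noteq> 0 \<and> a i0 z = 0}"
      proof (rule subsetI, rule ccontr)
        fix z assume z0: "z \<in> {z. z \<noteq> 0 \<and> f i0 z \<noteq> 0}" and z3: "z \<notin> S \<union> Zs \<union> {z. z \<noteq> 0 \<and> a i0 z = 0}"
        from z0 z3 have z: "z \<noteq> 0" "f i0 z \<noteq> 0" "z \<notin> S" "z \<notin> Zs" "a i0 z \<noteq> 0" by auto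
        have "(\<Sum>i\<in>I - {i0}. a i z * f i z) = 0"
          by (rule sum.neutral) (use z(1) z(4) in \<open>auto simp: Zs_def\<close>)
        moreover have "(\<Sum>i\<in>I. a i z * f i z) = a i0 z * f i0 z + (\<Sum>i\<in>I - {i0}. a i z * f i z)"
          using fin i0(1) by (rule sum.remove)
        moreover have "(\<Sum>i\<in>I. a i z * f i z) = 0" using z(1,3) by (auto simp: S_def)
        ultimately have "a i0 z * f i0 z = 0" by simp
        thus False using z by simp
      qed
    qed
    thus False using fnz i0(1) by blast
  qed
qed

section \<open>Theta function\<close>

definition tt :: "complex \<Rightarrow> complex \<Rightarrow> int \<Rightarrow> complex" where
  "tt q w n = (-1) powi n * q powi (- (n * (n - 1) div 2)) * w powi n"

lemma theta_tt: "theta q w = - infsum (\<lambda>n. tt q w n) UNIV"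
  by (simp add: theta_def tt_def)

lemma tri_int: "((m::int) + 1) * m div 2 = m * (m - 1) div 2 + m"
proof -
  have "(m + 1) * m = m * (m - 1) + m * 2" by (simp add: algebra_simps)
  thus ?thesis by simp
qed

lemma tt_shift:
  assumes "q \<noteq> 0" "z \<noteq> 0"
  shows "tt q (q * z) (m + 1) = - (q * z) * tt q z m"
proof -
  define E where "E = - (m * (m - 1) div 2)"
  have e: "- ((m + 1) * (m + 1 - 1) div 2) = E - m" unfolding E_def using tri_int[of m] by simp
  have "tt q (q * z) (m + 1) = (-1) powi (m + 1) * q powi (E - m) * (q * z) powi (m + 1)"
    unfolding tt_def e ..
  also have "\<dots> = ((-1) powi m * (-1)) * (q powi E / q powi m) * (q powi m * q * (z powi m * z))"
    using assms by (simp add: power_int_add power_int_diff power_int_mult_distrib)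
  also have "\<dots> = - (q * z) * ((-1) powi m * q powi E * z powi m)"
    using assms by (simp add: field_simps)
  finally show ?thesis unfolding tt_def E_def .
qed

lemma theta_feq:
  assumes "q \<noteq> 0" "z \<noteq> 0"
  shows "theta q (q * z) = - q * z * theta q z"
proof -
  have bij: "bij_betw (\<lambda>m::int. m + 1) UNIV UNIV"
    by (rule bij_betwI[of _ _ _ "\<lambda>m. m - 1"]) auto
  have "infsum (\<lambda>n. tt q (q * z) n) UNIV = infsum (\<lambda>m. tt q (q * z) (m + 1)) UNIV"
    using infsum_reindex_bij_betw[OF bij, of "\<lambda>n. tt q (q * z) n"] by simp
  also have "\<dots> = infsum (\<lambda>m. - (q * z) * tt q z m) UNIV"
    using tt_shift[OF assms] by simp
  also have "\<dots> = - (q * z) * infsum (\<lambda>n. tt q z n) UNIV"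
    by (rule infsum_cmult_right')
  finally show ?thesis unfolding theta_tt by simp
qed

lemma tri_nat: "Suc n * n div 2 = n * (n - 1) div 2 + n"
proof -
  have "Suc n * n = n * (n - 1) + n * 2" by (cases n) (auto simp: algebra_simps)
  thus ?thesis by simp
qed

lemma summ_tri:
  fixes \<rho> s :: real
  assumes "0 \<le> \<rho>" "\<rho> < 1" "0 \<le> s"
  shows "summable (\<lambda>n. \<rho> ^ (n * (n - 1) div 2) * s ^ n)"
proof -
  have "(\<lambda>n. \<rho> ^ n * s) \<longlonglongrightarrow> 0 * s"
    by (intro tendsto_intros) (use assms in auto)
  hence "eventually (\<lambda>n. \<rho> ^ n * s < 1/2) sequentially"
    by (intro order_tendstoD) auto
  then obtain N where N: "\<And>n. n \<ge> N \<Longrightarrow> \<rho> ^ n * s < 1/2" by (auto simp: eventually_sequentially)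
  show ?thesis
  proof (rule summable_ratio_test[of "1/2" N])
    fix n assume n: "n \<ge> N"
    have "\<rho> ^ (Suc n * (Suc n - 1) div 2) * s ^ Suc n = (\<rho> ^ (n * (n - 1) div 2) * s ^ n) * (\<rho> ^ n * s)"
    proof -
      have t: "Suc n * (Suc n - 1) div 2 = n * (n - 1) div 2 + n" using tri_nat[of n] by simp
      show ?thesis unfolding t by (simp only: power_add power_Suc mult_ac)
    qed
    also have "\<dots> \<le> (\<rho> ^ (n * (n - 1) div 2) * s ^ n) * (1/2)"
      using N[OF n] assms by (intro mult_left_mono) auto
    finally show "norm (\<rho> ^ (Suc n * (Suc n - 1) div 2) * s ^ Suc n) \<le> 1/2 * norm (\<rho> ^ (n * (n - 1) div 2) * s ^ n)"
      using assms by (simp add: mult_ac)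
  qed auto
qed

definition cF :: "complex \<Rightarrow> nat \<Rightarrow> complex" where
  "cF q n = (-1)^n / q^(n * (n - 1) div 2)"

definition cG :: "complex \<Rightarrow> nat \<Rightarrow> complex" where
  "cG q n = (-1)^(n + 1) / q^((n + 1) * (n + 2) div 2)"

definition thF :: "complex \<Rightarrow> complex \<Rightarrow> complex" where
  "thF q w = (\<Sum>n. cF q n * w^n)"

definition thG :: "complex \<Rightarrow> complex \<Rightarrow> complex" where
  "thG q w = (\<Sum>n. cG q n * w^n)"

lemma summ_cF:
  assumes "norm q > 1"
  shows "summable (\<lambda>n. norm (cF q n * w^n))"
proof -
  have "norm (cF q n * w^n) = inverse (norm q) ^ (n * (n - 1) div 2) * norm w ^ n" for n
    by (simp add: cF_def norm_mult norm_divide norm_power norm_inverse power_inverse divide_inverse mult_ac)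
  moreover have "summable (\<lambda>n. inverse (norm q) ^ (n * (n - 1) div 2) * norm w ^ n)"
    by (rule summ_tri) (use assms in \<open>auto simp: inverse_less_1_iff\<close>)
  ultimately show ?thesis by simp
qed

lemma summ_cG:
  assumes "norm q > 1"
  shows "summable (\<lambda>n. norm (cG q n * w^n))"
proof (rule summable_comparison_test'[OF summ_tri[of "inverse (norm q)" "norm w"]])
  show "0 \<le> inverse (norm q)" "inverse (norm q) < 1" "0 \<le> norm w"
    using assms by (auto simp: inverse_less_1_iff)
  fix n :: nat
  have le: "n * (n - 1) div 2 \<le> (n + 1) * (n + 2) div 2"
    by (intro div_le_mono mult_le_mono) auto
  have "norm (norm (cG q n * w^n)) = inverse (norm q) ^ ((n + 1) * (n + 2) div 2) * norm w ^ n"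
    by (simp add: cG_def norm_mult norm_divide norm_power norm_inverse power_inverse divide_inverse mult_ac)
  also have "\<dots> \<le> inverse (norm q) ^ (n * (n - 1) div 2) * norm w ^ n"
    using assms le by (intro mult_right_mono power_decreasing) (auto simp: inverse_le_1_iff)
  finally show "norm (norm (cG q n * w^n)) \<le> inverse (norm q) ^ (n * (n - 1) div 2) * norm w ^ n" .
qed

lemma tt_pos: "tt q w (int n) = cF q n * w^n"
proof -
  have e: "int n * (int n - 1) div 2 = int (n * (n - 1) div 2)"
  proof (cases n)
    case (Suc m)
    have "int (Suc m * (Suc m - 1)) = int (Suc m) * (int (Suc m) - 1)" by (simp add: algebra_simps)
    thus ?thesis unfolding Suc zdiv_int by (simp add: algebra_simps)
  qed simp
  show ?thesis unfolding tt_def cF_def e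
    by (simp add: power_int_minus divide_inverse)
qed

lemma inv_m1_pow: "inverse ((-1::complex)^n) = (-1)^n"
  by (cases "even n") auto

lemma tt_neg:
  assumes "w \<noteq> 0"
  shows "tt q w (- int n - 1) = (1/w) * (cG q n * (1/w)^n)"
proof -
  have e: "(- int (n+1)) * (- int (n+1) - 1) div 2 = int ((n + 1) * (n + 2) div 2)"
  proof -
    have "(- int (n+1)) * (- int (n+1) - 1) = int ((n + 1) * (n + 2))" by (simp add: algebra_simps)
    thus ?thesis by (simp only: zdiv_int) simp
  qed
  have m: "- int n - 1 = - int (n + 1)" by simp
  have "tt q w (- int n - 1) = (-1) powi (- int (n+1)) * q powi (- int ((n + 1) * (n + 2) div 2)) * w powi (- int (n+1))"
    unfolding m tt_def e ..
  also have "\<dots> = (-1)^(n+1) * inverse (q ^ ((n + 1) * (n + 2) div 2)) * inverse (w ^ (n+1))"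
    by (simp only: power_int_minus power_int_of_nat inv_m1_pow)
  also have "\<dots> = (1/w) * (cG q n * (1/w)^n)"
    by (simp add: cG_def divide_inverse power_one_over inverse_mult_distrib mult_ac power_inverse)
  finally show ?thesis .
qed

lemma theta_decomp:
  assumes q: "norm q > 1" and w: "w \<noteq> 0"
  shows "theta q w = - (thF q w + (1/w) * thG q (1/w))"
proof -
  have h1: "((\<lambda>n. tt q w (int n)) has_sum thF q w) UNIV"
  proof -
    have "((\<lambda>n. cF q n * w^n) has_sum thF q w) UNIV"
      unfolding thF_def using summ_cF[OF q]
      by (intro norm_summable_imp_has_sum summable_sums[OF summable_norm_cancel])
    thus ?thesis by (simp add: tt_pos)
  qed
  have h2: "((\<lambda>n. tt q w (- int n - 1)) has_sum (1/w) * thG q (1/w)) UNIV"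
  proof -
    have "((\<lambda>n. (1/w) * (cG q n * (1/w)^n)) has_sum (1/w) * thG q (1/w)) UNIV"
    proof (rule norm_summable_imp_has_sum)
      show "summable (\<lambda>n. norm ((1/w) * (cG q n * (1/w)^n)))"
      proof -
        have "(\<lambda>n. norm ((1/w) * (cG q n * (1/w)^n))) = (\<lambda>n. norm (1/w) * norm (cG q n * (1/w)^n))"
          by (simp only: norm_mult)
        thus ?thesis using summable_mult[OF summ_cG[OF q, of "1/w"], of "norm (1/w)"] by simp
      qed
      show "(\<lambda>n. (1/w) * (cG q n * (1/w)^n)) sums ((1/w) * thG q (1/w))"
        unfolding thG_def by (intro sums_mult summable_sums[OF summable_norm_cancel[OF summ_cG[OF q]]])
    qed
    thus ?thesis using w by (simp add: tt_neg)
  qed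
  have inj1: "inj (int :: nat \<Rightarrow> int)" by (rule injI) simp
  have inj2: "inj (\<lambda>n::nat. - int n - 1)" by (rule injI) simp
  have a: "((\<lambda>n. tt q w n) has_sum thF q w) (range int)"
    using has_sum_reindex[OF inj1, of "\<lambda>n. tt q w n" "thF q w"] h1 by (simp add: o_def)
  have b: "((\<lambda>n. tt q w n) has_sum (1/w) * thG q (1/w)) (range (\<lambda>n::nat. - int n - 1))"
    using has_sum_reindex[OF inj2, of "\<lambda>n. tt q w n"] h2 by (simp add: o_def)
  have disj: "range int \<inter> range (\<lambda>n::nat. - int n - 1) = {}" by auto
  have un: "range int \<union> range (\<lambda>n::nat. - int n - 1) = UNIV"
  proof (rule set_eqI)
    fix m :: int
    show "m \<in> range int \<union> range (\<lambda>n::nat. - int n - 1) \<longleftrightarrow> m \<in> UNIV"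
    proof (cases "m \<ge> 0")
      case True
      hence "m = int (nat m)" by simp
      thus ?thesis by (metis UNIV_I UnI1 rangeI)
    next
      case False
      hence "m = - int (nat (- m - 1)) - 1" by simp
      thus ?thesis by (metis UNIV_I UnI2 rangeI)
    qed
  qed
  have "((\<lambda>n. tt q w n) has_sum (thF q w + (1/w) * thG q (1/w))) UNIV"
    using has_sum_Un_disjoint[OF a b disj] un by simp
  hence "infsum (\<lambda>n. tt q w n) UNIV = thF q w + (1/w) * thG q (1/w)" by (rule infsumI)
  thus ?thesis by (simp add: theta_tt)
qed

lemma thF_deriv: "norm q > 1 \<Longrightarrow> ((thF q) has_field_derivative (\<Sum>n. diffs (cF q) n * x^n)) (at x)"
  unfolding thF_def[abs_def]
  by (rule termdiffs_strong_converges_everywhere) (rule summable_norm_cancel[OF summ_cF])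

lemma thG_deriv: "norm q > 1 \<Longrightarrow> ((thG q) has_field_derivative (\<Sum>n. diffs (cG q) n * x^n)) (at x)"
  unfolding thG_def[abs_def]
  by (rule termdiffs_strong_converges_everywhere) (rule summable_norm_cancel[OF summ_cG])

lemma theta_nonzero:
  assumes q: "norm q > 1"
  shows "\<not> countable {w. w \<noteq> 0 \<and> theta q w \<noteq> 0}"
proof
  assume C: "countable {w. w \<noteq> 0 \<and> theta q w \<noteq> 0}"
  define H where "H w = thF q w + (1/w) * thG q (1/w)" for w
  have cF: "isCont (thF q) x" for x using thF_deriv[OF q] by (rule DERIV_isCont)
  have cG: "isCont (thG q) x" for x using thG_deriv[OF q] by (rule DERIV_isCont)
  have cH: "isCont H w" if "w \<noteq> 0" for w
  proof -
    have "isCont (\<lambda>w. thG q (1/w)) w"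
      by (rule isCont_o2[OF _ cG]) (use that in \<open>intro continuous_intros\<close>)
    thus ?thesis unfolding H_def[abs_def] using that by (intro continuous_intros cF) auto
  qed
  have H0: "H w = 0" if w: "w \<noteq> 0" for w
  proof (rule ccontr)
    assume "H w \<noteq> 0"
    from continuous_at_avoid[OF cH[OF w] this] obtain e where e: "e > 0" "\<forall>y. dist w y < e \<longrightarrow> H y \<noteq> 0"
      by blast
    define e' where "e' = min e (norm w)"
    have e'0: "e' > 0" using e w by (simp add: e'_def)
    have "ball w e' \<subseteq> {w. w \<noteq> 0 \<and> theta q w \<noteq> 0}"
    proof
      fix y assume y: "y \<in> ball w e'"
      have "y \<noteq> 0"
      proof
        assume "y = 0"
        with y have "norm w < e'" by (simp add: dist_norm)
        thus False by (simp add: e'_def)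
      qed
      moreover have "H y \<noteq> 0" using e(2) y by (auto simp: e'_def)
      moreover have "theta q y = - H y" using theta_decomp[OF q \<open>y \<noteq> 0\<close>] by (simp add: H_def)
      ultimately show "y \<in> {w. w \<noteq> 0 \<and> theta q w \<noteq> 0}" by simp
    qed
    hence "countable (ball w e')" using C countable_subset by blast
    thus False using uncountable_ball[OF e'0, of w] by blast
  qed
  have "compact (thF q ` cball 0 1)"
    by (rule compact_continuous_image) (use cF in \<open>auto intro: continuous_at_imp_continuous_on\<close>)
  then obtain MF where MF: "\<forall>x\<in>cball 0 1. norm (thF q x) \<le> MF"
    using compact_imp_bounded bounded_iff by (metis image_eqI)
  have "compact (thG q ` cball 0 1)"
    by (rule compact_continuous_image) (use cG in \<open>auto intro: continuous_at_imp_continuous_on\<close>)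
  then obtain MG where MG: "\<forall>x\<in>cball 0 1. norm (thG q x) \<le> MG"
    using compact_imp_bounded bounded_iff by (metis image_eqI)
  have "norm (thG q 0) \<le> MG" using MG by simp
  hence MG0: "MG \<ge> 0" using norm_ge_zero[of "thG q 0"] by linarith
  have bnd: "norm (thF q w) \<le> max MF MG" for w
  proof (cases "norm w \<le> 1")
    case True
    hence "w \<in> cball 0 1" by simp
    hence "norm (thF q w) \<le> MF" using MF by blast
    thus ?thesis by linarith
  next
    case False
    hence w0: "w \<noteq> 0" by auto
    have "thF q w = - ((1/w) * thG q (1/w))" using H0[OF w0] unfolding H_def by (simp add: add_eq_0_iff)
    hence "norm (thF q w) = norm (1/w) * norm (thG q (1/w))" by (simp add: norm_mult norm_divide)
    also have "\<dots> \<le> 1 * MG"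
    proof (rule mult_mono)
      show "norm (1/w) \<le> 1" using False by (simp add: norm_divide divide_le_eq)
      have "1/w \<in> cball 0 1" using False by (simp add: norm_divide divide_le_eq)
      thus "norm (thG q (1/w)) \<le> MG" using MG by blast
    qed (use MG0 in auto)
    finally show ?thesis by simp
  qed
  have hol: "thF q holomorphic_on UNIV"
    unfolding holomorphic_on_def
    using thF_deriv[OF q] by (auto simp: field_differentiable_def intro: has_field_derivative_at_within)
  have "bounded (range (thF q))" unfolding bounded_iff using bnd by blast
  from Liouville_theorem[OF hol this] obtain c where c: "\<forall>x. thF q x = c"
    unfolding constant_on_def by blast
  have "thF q 0 = cF q 0" unfolding thF_def by (rule powser_zero)
  hence "thF q 0 = 1" by (simp add: cF_def)
  hence F1: "thF q x = 1" for x using c by metis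
  define u :: complex where "u = of_real (1 / (2 * (MG + 1)))"
  have pos: "1 / (2 * (MG + 1)) > 0" using MG0 by simp
  have nu: "norm u = 1 / (2 * (MG + 1))" unfolding u_def norm_of_real using pos by simp
  have u0: "u \<noteq> 0" using nu pos by auto
  have "H (1/u) = 0" using H0 u0 by simp
  hence "u * thG q u = -1" unfolding H_def F1 using u0 by (simp add: add_eq_0_iff)
  hence "1 = norm u * norm (thG q u)" by (metis norm_minus_cancel norm_mult norm_one)
  also have "\<dots> \<le> norm u * MG"
  proof (rule mult_left_mono)
    have "norm u \<le> 1" unfolding nu using MG0 by (simp add: field_simps)
    hence "u \<in> cball 0 1" by simp
    thus "norm (thG q u) \<le> MG" using MG by blast
  qed simp
  also have "\<dots> < 1"
  proof -
    have d: "2 * (MG + 1) > 0" using MG0 by simp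
    have "norm u * MG = MG / (2 * (MG + 1))" by (simp add: nu)
    also have "\<dots> < 1" using d MG0 by (simp add: divide_less_eq)
    finally show ?thesis .
  qed
  finally show False by simp
qed

lemma powi_eq_1:
  assumes "(x::real) > 1" "x powi k = 1"
  shows "k = 0"
proof (cases "k \<ge> 0")
  case True
  define n where "n = nat k"
  have n: "k = int n" using True by (simp add: n_def)
  with assms have "x ^ n = 1" by simp
  hence "n = 0" using assms(1) one_less_power[of x n] by (cases "n = 0") auto
  thus ?thesis using n by simp
next
  case False
  define n where "n = nat (- k)"
  have n: "k = - int n" "n > 0" using False by (auto simp: n_def)
  with assms have "inverse (x ^ n) = 1" by (simp add: power_int_minus)
  hence "x ^ n = 1" by simp
  thus ?thesis using assms(1) one_less_power[of x n] n(2) by simp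
qed

lemma root_dvd:
  fixes \<zeta> :: complex
  assumes "\<zeta> ^ t = 1" "\<forall>k. 0 < k \<and> k < t \<longrightarrow> \<zeta> ^ k \<noteq> 1" "\<zeta> ^ m = 1" "t > 0"
  shows "t dvd m"
proof (rule ccontr)
  assume nd: "\<not> t dvd m"
  have "\<zeta> ^ m = \<zeta> ^ (t * (m div t) + m mod t)" by simp
  also have "\<dots> = (\<zeta> ^ t) ^ (m div t) * \<zeta> ^ (m mod t)" by (simp only: power_add power_mult)
  finally have "\<zeta> ^ m = (\<zeta> ^ t) ^ (m div t) * \<zeta> ^ (m mod t)" .
  hence "\<zeta> ^ (m mod t) = 1" using assms(1,3) by simp
  moreover have "0 < m mod t" "m mod t < t" using nd assms(4) by (auto simp: dvd_eq_mod_eq_0)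
  ultimately show False using assms(2) by blast
qed

theorem theorem6:
  fixes q \<zeta> :: complex and t :: nat
    and lam0 :: "complex \<Rightarrow> complex" and lam :: "nat \<Rightarrow> nat \<Rightarrow> complex \<Rightarrow> complex"
  assumes "norm q > 1"
    and "prime t"
    and "\<zeta> ^ t = 1" and "\<forall>k. 0 < k \<and> k < t \<longrightarrow> \<zeta> ^ k \<noteq> 1"
    and "lam0 \<in> kappa_z q"
    and "\<forall>j<t. \<forall>d\<in>{1..t-1}. lam j d \<in> kappa_z q"
    and "mero_eq (\<lambda>z. lam0 z + (\<Sum>d=1..t-1. \<Sum>j<t. lam j d z * theta q (\<zeta> ^ j * z) ^ d)) (\<lambda>z. 0)"
  shows "mero_eq lam0 (\<lambda>z. 0) \<and> (\<forall>j<t. \<forall>d\<in>{1..t-1}. mero_eq (lam j d) (\<lambda>z. 0))"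
proof -
  note q = assms(1)
  have q0: "q \<noteq> 0" using q by auto
  have t0: "t > 0" using assms(2) prime_gt_0_nat by blast
  have z0: "\<zeta> \<noteq> 0" using assms(3) t0 by (auto simp: power_0_left)
  have nz: "norm \<zeta> = 1"
  proof (rule power_eq_imp_eq_base[of _ t])
    have "norm (\<zeta> ^ t) = 1" using assms(3) by simp
    thus "norm \<zeta> ^ t = 1 ^ t" by (simp add: norm_power)
  qed (use t0 in auto)
  define P where "P = {..<t} \<times> {1..t-1}"
  define I where "I = insert None (Some ` P)"
  define a where "a i = (case i of None \<Rightarrow> lam0 | Some (j, d) \<Rightarrow> lam j d)" for i
  define f where "f i = (case i of None \<Rightarrow> (\<lambda>z. 1) | Some (j, d) \<Rightarrow> (\<lambda>z. theta q (\<zeta>^j * z) ^ d))" for i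
  define gam where "gam i = (case i of None \<Rightarrow> 1 | Some (j, d) \<Rightarrow> (- q * \<zeta>^j) ^ d)" for i
  define e where "e i = (case i of None \<Rightarrow> 0 | Some (j, d) \<Rightarrow> d)" for i :: "(nat \<times> nat) option"
  have fin: "finite I" unfolding I_def P_def by simp
  have gam: "\<forall>i\<in>I. gam i \<noteq> 0" unfolding I_def gam_def using q0 z0 by auto
  have feq: "\<forall>i\<in>I. \<forall>z. z \<noteq> 0 \<longrightarrow> f i (q*z) = gam i * z^(e i) * f i z"
  proof (intro ballI allI impI)
    fix i z assume i: "i \<in> I" and z: "(z::complex) \<noteq> 0"
    show "f i (q*z) = gam i * z^(e i) * f i z"
    proof (cases i)
      case None thus ?thesis by (simp add: f_def gam_def e_def)
    next
      case (Some p)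
      obtain j d where p: "p = (j, d)" by (cases p)
      have "theta q (\<zeta>^j * (q * z)) = theta q (q * (\<zeta>^j * z))" by (simp add: mult_ac)
      also have "\<dots> = - q * (\<zeta>^j * z) * theta q (\<zeta>^j * z)" using z z0 q0 by (intro theta_feq) auto
      also have "\<dots> = ((- q * \<zeta>^j) * z) * theta q (\<zeta>^j * z)" by (simp add: algebra_simps)
      finally have "theta q (\<zeta>^j * (q * z)) ^ d = (((- q * \<zeta>^j) * z) * theta q (\<zeta>^j * z)) ^ d"
        by (rule arg_cong)
      also have "\<dots> = (- q * \<zeta>^j) ^ d * z ^ d * theta q (\<zeta>^j * z) ^ d"
        by (simp only: power_mult_distrib)
      finally have "theta q (\<zeta>^j * (q * z)) ^ d = (- q * \<zeta>^j) ^ d * z ^ d * theta q (\<zeta>^j * z) ^ d" .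
      thus ?thesis by (simp add: Some p f_def gam_def e_def)
    qed
  qed
  have fnz: "\<forall>i\<in>I. \<not> countable {z. z \<noteq> 0 \<and> f i z \<noteq> 0}"
  proof
    fix i assume "i \<in> I"
    show "\<not> countable {z. z \<noteq> 0 \<and> f i z \<noteq> 0}"
    proof (cases i)
      case None
      show ?thesis
      proof
        assume "countable {z. z \<noteq> 0 \<and> f i z \<noteq> 0}"
        hence "countable {z::complex. z \<noteq> 0 \<and> True}" by (simp add: None f_def)
        moreover have "countable {z::complex. z \<noteq> 0 \<and> \<not> True}" by simp
        ultimately show False by (rule countable_union_not_all)
      qed
    next
      case (Some p)
      obtain j d where p: "p = (j, d)" by (cases p)
      show ?thesis
      proof
        assume c: "countable {z. z \<noteq> 0 \<and> f i z \<noteq> 0}"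
        have sub: "{w. w \<noteq> 0 \<and> theta q w \<noteq> 0} \<subseteq> (\<lambda>z. \<zeta>^j * z) ` {z. z \<noteq> 0 \<and> f i z \<noteq> 0}"
        proof
          fix w assume w: "w \<in> {w. w \<noteq> 0 \<and> theta q w \<noteq> 0}"
          have "w = \<zeta>^j * (w / \<zeta>^j)" using z0 by simp
          moreover have "w / \<zeta>^j \<in> {z. z \<noteq> 0 \<and> f i z \<noteq> 0}"
            using w z0 by (simp add: Some p f_def)
          ultimately show "w \<in> (\<lambda>z. \<zeta>^j * z) ` {z. z \<noteq> 0 \<and> f i z \<noteq> 0}" by blast
        qed
        have "countable {w. w \<noteq> 0 \<and> theta q w \<noteq> 0}" by (rule countable_subset[OF sub countable_image[OF c]])
        thus False using theta_nonzero[OF q] by simp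
      qed
    qed
  qed
  have dist: "\<forall>i\<in>I. \<forall>i'\<in>I. i \<noteq> i' \<longrightarrow> e i = e i' \<longrightarrow> (\<forall>k::int. gam i' \<noteq> gam i * q powi k)"
  proof (intro ballI impI allI notI)
    fix i i' k assume ii: "i \<in> I" "i' \<in> I" "i \<noteq> i'" "e i = e i'" and g: "gam i' = gam i * q powi k"
    show False
    proof (cases i)
      case None
      then obtain j' d' where i': "i' = Some (j', d')" "d' \<ge> 1" using ii unfolding I_def P_def by auto
      thus False using ii None by (simp add: e_def)
    next
      case (Some p)
      obtain j d where i: "i = Some (j, d)" "j < t" "d \<ge> 1" "d \<le> t - 1"
        using ii(1) Some unfolding I_def P_def by (cases p) auto
      show False
      proof (cases i')
        case None thus False using ii i by (simp add: e_def)
      next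
        case (Some p')
        obtain j' d' where i': "i' = Some (j', d')" "j' < t" using ii(2) Some unfolding I_def P_def by (cases p') auto
        have dd: "d' = d" using ii(4) i i' by (simp add: e_def)
        have jj: "j \<noteq> j'" using ii(3) i i' dd by auto
        have g': "(- q * \<zeta>^j') ^ d = (- q * \<zeta>^j) ^ d * q powi k" using g i i' dd by (simp add: gam_def)
        have "norm ((- q * \<zeta>^j') ^ d) = norm ((- q * \<zeta>^j) ^ d) * norm q powi k"
          using g' by (simp add: norm_mult norm_power_int)
        hence "norm q ^ d = norm q ^ d * norm q powi k" using nz by (simp add: norm_mult norm_power)
        hence "norm q powi k = 1" using q0 by simp
        hence k0: "k = 0" using q by (rule powi_eq_1[rotated])
        have "(- q * \<zeta>^j') ^ d = (- q * \<zeta>^j) ^ d" using g' k0 by simp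
        hence "(- q) ^ d * (\<zeta>^j') ^ d = (- q) ^ d * (\<zeta>^j) ^ d" by (simp only: power_mult_distrib)
        hence "(- q) ^ d * \<zeta> ^ (j' * d) = (- q) ^ d * \<zeta> ^ (j * d)" by (simp only: power_mult)
        hence eqz: "\<zeta> ^ (j' * d) = \<zeta> ^ (j * d)" using q0 by simp
        have "t dvd (max j j' - min j j') * d"
        proof (rule root_dvd[OF assms(3) assms(4) _ t0])
          have "\<zeta> ^ ((max j j' - min j j') * d) * \<zeta> ^ (min j j' * d) = \<zeta> ^ (max j j' * d)"
          proof -
            have le: "min j j' * d \<le> max j j' * d" by (intro mult_le_mono1) simp
            have "(max j j' - min j j') * d + min j j' * d = max j j' * d"
              using le by (simp add: diff_mult_distrib)
            thus ?thesis by (simp only: power_add[symmetric])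
          qed
          also have "\<dots> = \<zeta> ^ (min j j' * d)" using eqz by (cases "j \<le> j'") (auto simp: max_def min_def)
          finally show "\<zeta> ^ ((max j j' - min j j') * d) = 1" using z0 by simp
        qed
        hence "t dvd (max j j' - min j j') \<or> t dvd d" using assms(2) by (simp add: prime_dvd_mult_iff)
        moreover have "\<not> t dvd (max j j' - min j j')"
        proof
          assume "t dvd (max j j' - min j j')"
          moreover have "0 < max j j' - min j j'" "max j j' - min j j' < t" using jj i(2) i'(2) by auto
          ultimately show False using dvd_imp_le by fastforce
        qed
        moreover have "\<not> t dvd d"
        proof
          assume "t dvd d"
          with i(3) have "t \<le> d" using dvd_imp_le by auto
          with i(4) t0 show False by linarith
        qed
        ultimately show False by blast
      qed
    qed
  qed
  have K: "\<forall>i\<in>I. a i \<in> Mero \<and> Erat q (a i)"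
    using kappa_z_K[OF q] assms(5,6) unfolding I_def P_def a_def by auto
  have sumeq: "(\<Sum>i\<in>I. a i z * f i z) = lam0 z + (\<Sum>d=1..t-1. \<Sum>j<t. lam j d z * theta q (\<zeta> ^ j * z) ^ d)" for z
  proof -
    have "(\<Sum>i\<in>I. a i z * f i z) = a None z * f None z + (\<Sum>i\<in>Some ` P. a i z * f i z)"
      unfolding I_def by (rule sum.insert) (auto simp: P_def)
    also have "(\<Sum>i\<in>Some ` P. a i z * f i z) = (\<Sum>p\<in>P. a (Some p) z * f (Some p) z)"
      by (rule sum.reindex_cong[of Some]) auto
    also have "\<dots> = (\<Sum>(j,d)\<in>{..<t} \<times> {1..t-1}. lam j d z * theta q (\<zeta> ^ j * z) ^ d)"
      unfolding P_def by (rule sum.cong) (auto simp: a_def f_def)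
    also have "\<dots> = (\<Sum>j<t. \<Sum>d=1..t-1. lam j d z * theta q (\<zeta> ^ j * z) ^ d)"
      by (rule sum.cartesian_product[symmetric])
    also have "\<dots> = (\<Sum>d=1..t-1. \<Sum>j<t. lam j d z * theta q (\<zeta> ^ j * z) ^ d)"
      by (rule sum.swap)
    finally show ?thesis by (simp add: a_def f_def)
  qed
  have rel: "countable {z. z \<noteq> 0 \<and> (\<Sum>i\<in>I. a i z * f i z) \<noteq> 0}"
    unfolding sumeq by (rule mero_eq_countable[OF assms(7)])
  have all: "\<forall>i\<in>I. mero_eq (a i) (\<lambda>z. 0)"
    by (rule indep_aux[OF q fin gam feq fnz dist refl K rel])
  show ?thesis
  proof
    show "mero_eq lam0 (\<lambda>z. 0)" using all unfolding I_def a_def by auto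
    show "\<forall>j<t. \<forall>d\<in>{1..t-1}. mero_eq (lam j d) (\<lambda>z. 0)"
    proof (intro allI impI ballI)
      fix j d assume "j < t" "d \<in> {1..t-1}"
      hence "Some (j, d) \<in> I" unfolding I_def P_def by auto
      thus "mero_eq (lam j d) (\<lambda>z. 0)" using all unfolding a_def by fastforce
    qed
  qed
qed

end
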